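(* Let $(T,X)$ be a flow ($T$ a Hausdorff topological group, $X$ a Hausdorff uniform space) and let $S$ be a thick normal subsemigroup of $T$. Let $x\in X$ be such that $\overline{S^{-1}x}$ is compact and the subflow $(T,Tx)$ is uniformly Lyapunov $S$-stable. Then $\overline{Tx}$ is compact, $(T,\overline{Tx})$ is minimal, and $(T,\overline{Tx})$ is an a.p. flow.
   Context: $\mathscr U_X$ is a compatible symmetric uniformity of $X$. $S\subseteq T$ is (right) thick if for every compact $K\subseteq T$ there is $t$ with $Kt\subseteq S$; normal means $St=tS$ for all $t\in T$; $S^{-1}=\{s^{-1}:s\in S\}$. $(T,Tx)$ is uniformly Lyapunov $S$-stable if for every $\varepsilon\in\mathscr U_X$ there is $\delta\in\mathscr U_X$ such that $(sy,sz)\in\varepsilon$ for all $s\in S$ and all $y,z\in Tx$ with $(y,z)\in\delta$. $A\subseteq T$ is syndetic if there is compact $K$ with $Kt\cap A\neq\emptyset$ for all $t$. A flow $(T,Z)$ is an a.p. flow if for every $\alpha$ in its uniformity there is a syndetic $A\subseteq T$ with $Az\subseteq\alpha[z]$ for all $z\in Z$. *)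

theory Defs
  imports "HOL-Analysis.Analysis"
begin

text \<open>The phase group T is a Hausdorff topological group, written
additively (class topological_group_add, which is NOT assumed commutative):
the group product s t is written s + t, the inverse of s is - s, the unit is 0.
The phase space X is a Hausdorff uniform space (class uniform_space + t2_space);
an entourage is a set E of pairs with eventually (\<lambda>p. p \<in> E) uniformity.\<close>

definition entourage :: "('x::uniform_space \<times> 'x) set \<Rightarrow> bool" where
  "entourage E \<longleftrightarrow> eventually (\<lambda>p. p \<in> E) uniformity"

definition is_flow :: "('t::topological_group_add \<Rightarrow> 'x::topological_space \<Rightarrow> 'x) \<Rightarrow> bool" where
  "is_flow act \<longleftrightarrow> continuous_on UNIV (\<lambda>(t, x). act t x)
     \<and> (\<forall>x. act 0 x = x) \<and> (\<forall>s t x. act (s + t) x = act s (act t x))"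

definition orbit :: "('t \<Rightarrow> 'x \<Rightarrow> 'x) \<Rightarrow> 't set \<Rightarrow> 'x \<Rightarrow> 'x set" where
  "orbit act A x = (\<lambda>t. act t x) ` A"

definition subsemigroup :: "'t::group_add set \<Rightarrow> bool" where
  "subsemigroup S \<longleftrightarrow> (\<forall>s\<in>S. \<forall>t\<in>S. s + t \<in> S)"

definition thick :: "'t::topological_group_add set \<Rightarrow> bool" where
  "thick S \<longleftrightarrow> (\<forall>K. compact K \<longrightarrow> (\<exists>t. (\<lambda>k. k + t) ` K \<subseteq> S))"

definition normal_subset :: "'t::group_add set \<Rightarrow> bool" where
  "normal_subset S \<longleftrightarrow> (\<forall>t. (\<lambda>s. s + t) ` S = (\<lambda>s. t + s) ` S)"

definition syndetic :: "'t::topological_group_add set \<Rightarrow> bool" where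
  "syndetic A \<longleftrightarrow> (\<exists>K. compact K \<and> (\<forall>t. (\<lambda>k. k + t) ` K \<inter> A \<noteq> {}))"

definition unif_lyapunov_stable ::
  "('t::topological_group_add \<Rightarrow> 'x::uniform_space \<Rightarrow> 'x) \<Rightarrow> 't set \<Rightarrow> 'x \<Rightarrow> bool" where
  "unif_lyapunov_stable act S x \<longleftrightarrow>
     (\<forall>\<epsilon>. entourage \<epsilon> \<longrightarrow> (\<exists>\<delta>. entourage \<delta> \<and>
        (\<forall>s\<in>S. \<forall>y\<in>orbit act UNIV x. \<forall>z\<in>orbit act UNIV x.
            (y, z) \<in> \<delta> \<longrightarrow> (act s y, act s z) \<in> \<epsilon>)))"

definition invariant :: "('t \<Rightarrow> 'x \<Rightarrow> 'x) \<Rightarrow> 'x set \<Rightarrow> bool" where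
  "invariant act Z \<longleftrightarrow> (\<forall>t. \<forall>z\<in>Z. act t z \<in> Z)"

definition minimal_flow :: "('t \<Rightarrow> 'x::topological_space \<Rightarrow> 'x) \<Rightarrow> 'x set \<Rightarrow> bool" where
  "minimal_flow act Z \<longleftrightarrow> Z \<noteq> {} \<and> invariant act Z \<and>
     (\<forall>A. closedin (top_of_set Z) A \<and> A \<noteq> {} \<and> invariant act A \<longrightarrow> A = Z)"

text \<open>Entourages of the subspace uniformity of Z are the
traces E \<inter> Z\<times>Z of entourages E of X; since A z \<subseteq> Z, the condition
A z \<subseteq> (E \<inter> Z\<times>Z)[z] is the same as A z \<subseteq> E[z].\<close>
definition ap_flow :: "('t::topological_group_add \<Rightarrow> 'x::uniform_space \<Rightarrow> 'x) \<Rightarrow> 'x set \<Rightarrow> bool" where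
  "ap_flow act Z \<longleftrightarrow> invariant act Z \<and>
     (\<forall>\<alpha>. entourage \<alpha> \<longrightarrow> (\<exists>A. syndetic A \<and> (\<forall>z\<in>Z. \<forall>a\<in>A. (z, act a z) \<in> \<alpha>)))"

end

theory Submission imports Defs begin

lemma ent_refl: "entourage E \<Longrightarrow> (a, a) \<in> E"
  unfolding entourage_def using uniformity_refl[of "\<lambda>p. p \<in> E"] by simp

lemma ent_int: "entourage E \<Longrightarrow> entourage F \<Longrightarrow> entourage (E \<inter> F)"
  unfolding entourage_def by (simp add: eventually_conj)

lemma ent_mono: "entourage E \<Longrightarrow> E \<subseteq> F \<Longrightarrow> entourage F"
  unfolding entourage_def by (auto elim: eventually_mono)

lemma ent_conv: "entourage E \<Longrightarrow> entourage {(a, b). (b, a) \<in> E}"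
  unfolding entourage_def using uniformity_sym[of "\<lambda>p. p \<in> E"]
  by (simp add: case_prod_unfold)

lemma ent_split2:
  assumes "entourage E"
  shows "\<exists>D. entourage D \<and> (\<forall>a b c. (a,b)\<in>D \<longrightarrow> (b,c)\<in>D \<longrightarrow> (a,c)\<in>E)"
proof -
  obtain D where "eventually D uniformity" "\<And>x y z. D (x, y) \<Longrightarrow> D (y, z) \<Longrightarrow> (x, z) \<in> E"
    using uniformity_transE[of "\<lambda>p. p \<in> E"] assms unfolding entourage_def by metis
  then show ?thesis
    by (intro exI[of _ "{p. D p}"]) (auto simp: entourage_def)
qed

lemma ent_split4:
  assumes "entourage E"
  obtains F where "entourage F" "\<And>a b. (a,b)\<in>F \<Longrightarrow> (b,a)\<in>F"
    "\<And>a b c d e. (a,b)\<in>F \<Longrightarrow> (b,c)\<in>F \<Longrightarrow> (c,d)\<in>F \<Longrightarrow> (d,e)\<in>F \<Longrightarrow> (a,e)\<in>E"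
proof -
  obtain D1 where D1: "entourage D1" "\<forall>a b c. (a,b)\<in>D1 \<longrightarrow> (b,c)\<in>D1 \<longrightarrow> (a,c)\<in>E"
    using ent_split2[OF assms] by blast
  obtain D2 where D2: "entourage D2" "\<forall>a b c. (a,b)\<in>D2 \<longrightarrow> (b,c)\<in>D2 \<longrightarrow> (a,c)\<in>D1"
    using ent_split2[OF D1(1)] by blast
  let ?F = "D2 \<inter> {(a, b). (b, a) \<in> D2}"
  have "entourage ?F" using D2(1) by (simp add: ent_int ent_conv)
  moreover have "\<And>a b. (a,b)\<in>?F \<Longrightarrow> (b,a)\<in>?F" by auto
  moreover have "(a,e)\<in>E" if "(a,b)\<in>?F" "(b,c)\<in>?F" "(c,d)\<in>?F" "(d,e)\<in>?F" for a b c d e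
  proof -
    have "(a,c) \<in> D1" using D2(2) that(1,2) by blast
    moreover have "(c,e) \<in> D1" using D2(2) that(3,4) by blast
    ultimately show ?thesis using D1(2) by blast
  qed
  ultimately show ?thesis using that by blast
qed

lemma ent_nhds: "entourage E \<Longrightarrow> eventually (\<lambda>z. (y, z) \<in> E) (nhds y)"
  unfolding eventually_nhds_uniformity entourage_def
  by (auto elim: eventually_mono)

lemma closure_ent: "y \<in> closure A \<Longrightarrow> entourage E \<Longrightarrow> \<exists>a\<in>A. (y, a) \<in> E"
proof -
  assume y: "y \<in> closure A" and E: "entourage E"
  from ent_nhds[OF E, of y] obtain U where "open U" "y \<in> U" "\<forall>z\<in>U. (y, z) \<in> E"
    unfolding eventually_nhds by blast
  with y show ?thesis unfolding closure_iff_nhds_not_empty by blast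
qed

lemma closure_ent_ev:
  assumes "y \<in> closure A" "eventually P (nhds y)"
  shows "\<exists>a\<in>A. P a"
proof -
  from assms(2) obtain U where "open U" "y \<in> U" "\<forall>z\<in>U. P z"
    unfolding eventually_nhds by blast
  with assms(1) show ?thesis unfolding closure_iff_nhds_not_empty by blast
qed

lemma closure_entI:
  assumes "\<And>E. entourage E \<Longrightarrow> \<exists>a\<in>A. (y, a) \<in> E"
  shows "y \<in> closure A"
  unfolding closure_iff_nhds_not_empty
proof (intro allI impI)
  fix B U assume "U \<subseteq> B" "open U" "y \<in> U"
  then have "eventually (\<lambda>z. z \<in> U) (nhds y)" using eventually_nhds_in_open by blast
  then have "entourage {(x', z). x' = y \<longrightarrow> z \<in> U}"
    unfolding eventually_nhds_uniformity entourage_def by (simp add: case_prod_unfold)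
  from assms[OF this] \<open>U \<subseteq> B\<close> show "A \<inter> B \<noteq> {}" by auto
qed

lemma cont_ev:
  assumes "continuous_on UNIV f" "eventually P (nhds (f y))"
  shows "eventually (\<lambda>z. P (f z)) (nhds y)"
proof -
  from assms(2) obtain U where U: "open U" "f y \<in> U" "\<forall>z\<in>U. P z"
    unfolding eventually_nhds by blast
  have "open (f -` U)" using open_vimage[OF U(1) assms(1)] .
  then show ?thesis unfolding eventually_nhds using U by (intro exI[of _ "f -` U"]) auto
qed

lemma compact_ent_cover:
  assumes "compact Y" "entourage E"
  obtains C where "finite C" "C \<subseteq> Y" "\<And>z. z \<in> Y \<Longrightarrow> \<exists>c\<in>C. (c, z) \<in> E"
proof -
  have inn: "c \<in> interior {z. (c, z) \<in> E}" for c
  proof -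
    from ent_nhds[OF assms(2), of c] obtain U where "open U" "c \<in> U" "\<forall>z\<in>U. (c, z) \<in> E"
      unfolding eventually_nhds by blast
    then show ?thesis by (intro interiorI[of U]) auto
  qed
  have cov: "Y \<subseteq> (\<Union>c\<in>Y. interior {z. (c, z) \<in> E})"
  proof
    fix z assume "z \<in> Y" then show "z \<in> (\<Union>c\<in>Y. interior {z. (c, z) \<in> E})" using inn[of z] by (rule UN_I)
  qed
  obtain C where C: "C \<subseteq> Y" "finite C" "Y \<subseteq> (\<Union>c\<in>C. interior {z. (c, z) \<in> E})"
    by (rule compactE_image[OF assms(1) open_interior cov])
  moreover have "\<exists>c\<in>C. (c, z) \<in> E" if "z \<in> Y" for z
  proof -
    from that C(3) obtain c where "c \<in> C" "z \<in> interior {z. (c, z) \<in> E}" by blast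
    then show ?thesis using interior_subset by blast
  qed
  ultimately show ?thesis using that by blast
qed

lemma pigeon_nat:
  assumes "finite F" "\<And>n. f n \<in> F"
  obtains k l :: nat where "k < l" "f k = f l"
proof -
  have "\<not> inj f"
  proof
    assume "inj f"
    moreover have "finite (range f)" using assms by (meson finite_subset image_subsetI)
    ultimately have "finite (UNIV :: nat set)" using finite_imageD by blast
    then show False by simp
  qed
  then obtain k l where "k \<noteq> l" "f k = f l" unfolding inj_def by blast
  then show ?thesis using that by (cases "k < l") (auto simp: not_less_iff_gr_or_eq)
qed


fun pw :: "nat \<Rightarrow> 'a::monoid_add \<Rightarrow> 'a" where
  "pw 0 h = 0" | "pw (Suc n) h = h + pw n h"

lemma pw_add: "pw (m + n) h = pw m h + pw n h"
  by (induction m) (auto simp: add.assoc)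

lemma pw_in: "subsemigroup S \<Longrightarrow> h \<in> S \<Longrightarrow> pw (Suc n) h \<in> S"
  by (induction n) (auto simp: subsemigroup_def)

lemma pw_in2: "subsemigroup S \<Longrightarrow> h \<in> S \<Longrightarrow> a \<in> S \<Longrightarrow> a + pw n h \<in> S"
  by (cases n) (simp, metis pw_in subsemigroup_def)

locale flowctx =
  fixes act :: "'t::topological_group_add \<Rightarrow> 'x::uniform_space \<Rightarrow> 'x"
    and S :: "'t set" and x :: 'x
  assumes flow: "is_flow act" and semi: "subsemigroup S" and thick: "thick S"
    and cpt: "compact (closure (orbit act (uminus ` S) x))"
    and stab: "unif_lyapunov_stable act S x"
begin

abbreviation "Ob \<equiv> orbit act UNIV x"
abbreviation "Zc \<equiv> closure Ob"
abbreviation "Yc \<equiv> closure (orbit act (uminus ` S) x)"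

lemma act_add: "act (s + t) y = act s (act t y)"
  using flow unfolding is_flow_def by blast

lemma act_0[simp]: "act 0 y = y"
  using flow unfolding is_flow_def by blast

lemma act_inv[simp]: "act (-t) (act t y) = y" "act t (act (-t) y) = y"
  by (metis act_0 act_add add.left_inverse) (metis act_0 act_add add.right_inverse)

lemma act_cont: "continuous_on UNIV (act t)"
proof -
  have "continuous_on UNIV (\<lambda>(t, x). act t x)" using flow unfolding is_flow_def by blast
  then have "continuous_on UNIV ((\<lambda>(t, x). act t x) \<circ> (\<lambda>z. (t, z)))"
    by (intro continuous_on_compose continuous_intros) (auto elim: continuous_on_subset)
  then show ?thesis by (simp add: o_def)
qed

lemma stabE:
  assumes "entourage E"
  obtains D where "entourage D"
    "\<And>s y z. s \<in> S \<Longrightarrow> y \<in> Ob \<Longrightarrow> z \<in> Ob \<Longrightarrow> (y, z) \<in> D \<Longrightarrow> (act s y, act s z) \<in> E"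
  using stab assms unfolding unif_lyapunov_stable_def by blast

lemma thick_pair: obtains a where "a \<in> S" "t + a \<in> S"
proof -
  have "compact {0, t}" by simp
  then obtain a where "(\<lambda>k. k + a) ` {0, t} \<subseteq> S" using thick unfolding thick_def by blast
  then show ?thesis using that by auto
qed

lemma orbit_in_Y: "act t x \<in> Yc"
proof (rule closure_entI)
  fix E :: "('x \<times> 'x) set" assume E: "entourage E"
  obtain D where D: "entourage D"
    "\<And>s y z. s \<in> S \<Longrightarrow> y \<in> Ob \<Longrightarrow> z \<in> Ob \<Longrightarrow> (y, z) \<in> D \<Longrightarrow> (act s y, act s z) \<in> E"
    using stabE[OF E] by blast
  obtain F where F: "entourage F" "\<And>a b. (a,b)\<in>F \<Longrightarrow> (b,a)\<in>F"
    "\<And>a b c d e. (a,b)\<in>F \<Longrightarrow> (b,c)\<in>F \<Longrightarrow> (c,d)\<in>F \<Longrightarrow> (d,e)\<in>F \<Longrightarrow> (a,e)\<in>D"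
    using ent_split4[OF D(1)] by blast
  obtain C where C: "finite C" "C \<subseteq> Yc" "\<And>z. z \<in> Yc \<Longrightarrow> \<exists>c\<in>C. (c, z) \<in> F"
    using compact_ent_cover[OF cpt F(1)] by blast
  obtain a where a: "a \<in> S" "t + a \<in> S" using thick_pair by blast
  define h where "h = t + a"
  have h: "h \<in> S" using a h_def by simp
  define p where "p n = act (- (a + pw n h)) x" for n
  have pY: "p n \<in> Yc" for n
  proof -
    have "p n \<in> orbit act (uminus ` S) x"
      unfolding p_def orbit_def using pw_in2[OF semi h a(1)] by blast
    then show ?thesis using closure_subset by blast
  qed
  have pO: "p n \<in> Ob" for n unfolding p_def orbit_def by simp
  define f where "f n = (SOME c. c \<in> C \<and> (c, p n) \<in> F)" for n
  have f: "f n \<in> C \<and> (f n, p n) \<in> F" for n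
    unfolding f_def by (rule someI_ex) (use C(3)[OF pY[of n]] in blast)
  obtain k l where kl: "k < l" "f k = f l" using pigeon_nat[OF C(1), of f] f by blast
  have "(p k, p l) \<in> D"
    using F(3)[of "p k" "f k" "p l" "p l" "p l"] F(2) f[of k] f[of l] kl(2) ent_refl[OF F(1)] by metis
  define s where "s = pw (Suc k) h"
  have s: "s \<in> S" unfolding s_def using pw_in[OF semi h] .
  define u where "u = a + pw (l - Suc k) h"
  have u: "u \<in> S" unfolding u_def using pw_in2[OF semi h a(1)] .
  have "(act s (p k), act s (p l)) \<in> E" using D(2)[OF s pO pO \<open>(p k, p l) \<in> D\<close>] .
  moreover have "act s (p k) = act t x"
  proof -
    have "s = t + (a + pw k h)" unfolding s_def h_def by (simp add: add.assoc)
    then have "s + - (a + pw k h) = t" by (simp add: add.assoc)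
    then show ?thesis unfolding p_def by (metis act_add)
  qed
  moreover have "act s (p l) = act (-u) x"
  proof -
    have "l = (l - Suc k) + Suc k" using kl(1) by simp
    then have "a + pw l h = u + s" unfolding u_def s_def by (metis pw_add add.assoc)
    then have "s + - (a + pw l h) = s + (-s + -u)" by (metis minus_add)
    also have "\<dots> = - u" by (metis add.assoc add.right_inverse add_0)
    finally have "s + - (a + pw l h) = - u" .
    then show ?thesis unfolding p_def by (metis act_add)
  qed
  moreover have "act (-u) x \<in> orbit act (uminus ` S) x" unfolding orbit_def using u by blast
  ultimately show "\<exists>b\<in>orbit act (uminus ` S) x. (act t x, b) \<in> E" by metis
qed

lemma Z_eq_Y: "Zc = Yc"
proof
  show "Zc \<subseteq> Yc" using orbit_in_Y unfolding orbit_def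
    by (intro closure_minimal) (auto simp: orbit_def)
  show "Yc \<subseteq> Zc" unfolding orbit_def by (intro closure_mono) auto
qed

lemma Z_compact: "compact Zc" using cpt Z_eq_Y by simp

end

context flowctx begin

lemma Z_inv: "z \<in> Zc \<Longrightarrow> act t z \<in> Zc"
proof -
  assume z: "z \<in> Zc"
  have "act t ` Zc \<subseteq> Zc"
  proof (rule image_closure_subset)
    show "continuous_on Zc (act t)" using act_cont by (rule continuous_on_subset) simp
    show "closed Zc" by simp
    show "act t ` Ob \<subseteq> Zc"
    proof
      fix v assume "v \<in> act t ` Ob"
      then obtain r where "v = act t (act r x)" unfolding orbit_def by blast
      then have "v = act (t + r) x" by (simp add: act_add)
      then have "v \<in> Ob" unfolding orbit_def by blast
      then show "v \<in> Zc" using closure_subset by blast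
    qed
  qed
  then show ?thesis using z by blast
qed

lemma invariant_Z: "invariant act Zc"
  unfolding invariant_def using Z_inv by blast

lemma stabZ:
  assumes E: "entourage E"
  obtains D where "entourage D"
    "\<And>s y w. s \<in> S \<Longrightarrow> y \<in> Zc \<Longrightarrow> w \<in> Zc \<Longrightarrow> (y, w) \<in> D \<Longrightarrow> (act s y, act s w) \<in> E"
proof -
  obtain F where F: "entourage F" "\<And>a b. (a,b)\<in>F \<Longrightarrow> (b,a)\<in>F"
    "\<And>a b c d e. (a,b)\<in>F \<Longrightarrow> (b,c)\<in>F \<Longrightarrow> (c,d)\<in>F \<Longrightarrow> (d,e)\<in>F \<Longrightarrow> (a,e)\<in>E"
    using ent_split4[OF E] by blast
  obtain D0 where D0: "entourage D0"
    "\<And>s y z. s \<in> S \<Longrightarrow> y \<in> Ob \<Longrightarrow> z \<in> Ob \<Longrightarrow> (y, z) \<in> D0 \<Longrightarrow> (act s y, act s z) \<in> F"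
    using stabE[OF F(1)] by blast
  obtain G where G: "entourage G" "\<And>a b. (a,b)\<in>G \<Longrightarrow> (b,a)\<in>G"
    "\<And>a b c d e. (a,b)\<in>G \<Longrightarrow> (b,c)\<in>G \<Longrightarrow> (c,d)\<in>G \<Longrightarrow> (d,e)\<in>G \<Longrightarrow> (a,e)\<in>D0"
    using ent_split4[OF D0(1)] by blast
  have approx: "\<exists>y'\<in>Ob. (y, y') \<in> G \<and> (act s y, act s y') \<in> F" if "y \<in> Zc" for s y
  proof -
    have "eventually (\<lambda>z. (y, z) \<in> G \<and> (act s y, act s z) \<in> F) (nhds y)"
      using ent_nhds[OF G(1)] cont_ev[OF act_cont ent_nhds[OF F(1)]] by (rule eventually_conj)
    then show ?thesis using closure_ent_ev[OF that] by blast
  qed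
  have "(act s y, act s w) \<in> E"
    if s: "s \<in> S" and y: "y \<in> Zc" and w: "w \<in> Zc" and yw: "(y, w) \<in> G" for s y w
  proof -
    obtain y' where y': "y' \<in> Ob" "(y, y') \<in> G" "(act s y, act s y') \<in> F" using approx[OF y] by blast
    obtain w' where w': "w' \<in> Ob" "(w, w') \<in> G" "(act s w, act s w') \<in> F" using approx[OF w] by blast
    have "(y', w') \<in> D0" using G(3)[OF G(2)[OF y'(2)] yw w'(2) ent_refl[OF G(1)]] .
    then have "(act s y', act s w') \<in> F" using D0(2)[OF s y'(1) w'(1)] by blast
    then show ?thesis using F(3)[OF y'(3) _ F(2)[OF w'(3)] ent_refl[OF F(1)]] by blast
  qed
  then show ?thesis using that G(1) by blast
qed

lemma x_in_closure: "z \<in> Zc \<Longrightarrow> x \<in> closure (orbit act S z)"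
proof (rule closure_entI)
  fix E :: "('x \<times> 'x) set" assume z: "z \<in> Zc" and E: "entourage E"
  obtain D where D: "entourage D"
    "\<And>s y w. s \<in> S \<Longrightarrow> y \<in> Zc \<Longrightarrow> w \<in> Zc \<Longrightarrow> (y, w) \<in> D \<Longrightarrow> (act s y, act s w) \<in> E"
    using stabZ[OF E] by blast
  have "z \<in> Yc" using z Z_eq_Y by simp
  then obtain b where b: "b \<in> orbit act (uminus ` S) x" "(z, b) \<in> {(a, b). (b, a) \<in> D}"
    using closure_ent[OF \<open>z \<in> Yc\<close> ent_conv[OF D(1)]] by (elim bexE) (rule that)
  then obtain u where u: "u \<in> S" "b = act (-u) x" unfolding orbit_def by auto
  have "b \<in> Ob" using u unfolding orbit_def by simp
  then have bZ: "b \<in> Zc" using closure_subset by auto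
  have "(act u b, act u z) \<in> E" using D(2)[OF u(1) bZ z] b(2) by simp
  then have "(x, act u z) \<in> E" using u by simp
  moreover have "act u z \<in> orbit act S z" using u unfolding orbit_def by blast
  ultimately show "\<exists>a\<in>orbit act S z. (x, a) \<in> E" by blast
qed

lemma minimal_Z: "minimal_flow act Zc"
  unfolding minimal_flow_def
proof (intro conjI allI impI)
  have "x \<in> Ob" unfolding orbit_def by (metis act_0 rangeI)
  then show "Zc \<noteq> {}" using closure_subset by auto
  show "invariant act Zc" by (rule invariant_Z)
  fix A assume A: "closedin (top_of_set Zc) A \<and> A \<noteq> {} \<and> invariant act A"
  have A1: "closedin (top_of_set Zc) A" and A2: "A \<noteq> {}" and A3: "\<And>t z. z \<in> A \<Longrightarrow> act t z \<in> A"
    using A unfolding invariant_def by auto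
  have AZ: "A \<subseteq> Zc" using closedin_imp_subset[OF A1] by simp
  have cA: "closed A" by (rule closedin_closed_trans[OF A1 closed_closure])
  obtain z where z: "z \<in> A" using A2 by auto
  have "orbit act S z \<subseteq> A" unfolding orbit_def using A3[OF z] by auto
  then have "closure (orbit act S z) \<subseteq> A" using cA by (rule closure_minimal)
  moreover have "z \<in> Zc" using z AZ by auto
  ultimately have "x \<in> A" using x_in_closure[of z] by auto
  then have "Ob \<subseteq> A" unfolding orbit_def using A3 by auto
  then have "Zc \<subseteq> A" using cA by (rule closure_minimal)
  then show "A = Zc" using AZ by auto
qed

end

context flowctx begin

lemma TB:
  assumes Geq: "\<And>E. entourage E \<Longrightarrow> \<exists>D. entourage D \<and>
      (\<forall>g\<in>G. \<forall>y\<in>Zc. \<forall>w\<in>Zc. (y,w)\<in>D \<longrightarrow> (act g y, act g w) \<in> E)"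
    and beta: "entourage \<beta>"
  obtains F where "finite F" "F \<subseteq> G" "\<And>g. g \<in> G \<Longrightarrow> \<exists>f\<in>F. \<forall>z\<in>Zc. (act g z, act f z) \<in> \<beta>"
proof -
  obtain B where B: "entourage B" "\<And>a b. (a,b)\<in>B \<Longrightarrow> (b,a)\<in>B"
    "\<And>a b c d e. (a,b)\<in>B \<Longrightarrow> (b,c)\<in>B \<Longrightarrow> (c,d)\<in>B \<Longrightarrow> (d,e)\<in>B \<Longrightarrow> (a,e)\<in>\<beta>"
    using ent_split4[OF beta] by blast
  obtain D where D: "entourage D" "\<And>g y w. g \<in> G \<Longrightarrow> y \<in> Zc \<Longrightarrow> w \<in> Zc \<Longrightarrow> (y,w)\<in>D \<Longrightarrow> (act g y, act g w) \<in> B"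
    using Geq[OF B(1)] by blast
  obtain C where C: "finite C" "C \<subseteq> Zc" "\<And>z. z \<in> Zc \<Longrightarrow> \<exists>c\<in>C. (c, z) \<in> D"
    using compact_ent_cover[OF Z_compact D(1)] by blast
  obtain Dd where Dd: "finite Dd" "Dd \<subseteq> Zc" "\<And>z. z \<in> Zc \<Longrightarrow> \<exists>d\<in>Dd. (d, z) \<in> B"
    using compact_ent_cover[OF Z_compact B(1)] by blast
  define ch where "ch v = (SOME d. d \<in> Dd \<and> (d, v) \<in> B)" for v
  have ch: "ch v \<in> Dd \<and> (ch v, v) \<in> B" if "v \<in> Zc" for v
    unfolding ch_def by (rule someI_ex) (use Dd(3)[OF that] in blast)
  define P where "P g = restrict (\<lambda>c. ch (act g c)) C" for g
  have PG: "P g \<in> PiE C (\<lambda>_. Dd)" for g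
    unfolding P_def using ch Z_inv C(2) by auto
  define rep where "rep \<pi> = (SOME g. g \<in> G \<and> P g = \<pi>)" for \<pi>
  have rep: "rep (P g) \<in> G \<and> P (rep (P g)) = P g" if "g \<in> G" for g
    unfolding rep_def by (rule someI_ex) (use that in blast)
  define F where "F = rep ` (P ` G)"
  have "finite (P ` G)"
    by (rule finite_subset[OF _ finite_PiE[OF C(1)]]) (use PG Dd(1) in auto)
  then have "finite F" unfolding F_def by simp
  moreover have "F \<subseteq> G" unfolding F_def using rep by auto
  moreover have "\<exists>f\<in>F. \<forall>z\<in>Zc. (act g z, act f z) \<in> \<beta>" if g: "g \<in> G" for g
  proof (intro bexI ballI)
    let ?f = "rep (P g)"
    show "?f \<in> F" unfolding F_def using g by blast
    have f: "?f \<in> G" "P ?f = P g" using rep[OF g] by auto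
    fix z assume z: "z \<in> Zc"
    obtain c where c: "c \<in> C" "(c, z) \<in> D" using C(3)[OF z] by blast
    have cZ: "c \<in> Zc" using c C(2) by auto
    have 1: "(act g z, act g c) \<in> B" using B(2)[OF D(2)[OF g cZ z c(2)]] .
    have 2: "(act ?f c, act ?f z) \<in> B" using D(2)[OF f(1) cZ z c(2)] .
    have "P g c = P ?f c" using f(2) by simp
    then have eq: "ch (act g c) = ch (act ?f c)" unfolding P_def using c(1) by simp
    have 3: "(act g c, ch (act g c)) \<in> B" using B(2) ch[OF Z_inv[OF cZ]] by blast
    have 4: "(ch (act ?f c), act ?f c) \<in> B" using ch[OF Z_inv[OF cZ]] by blast
    show "(act g z, act ?f z) \<in> \<beta>" using B(3)[OF 1 3 _ 2] 4 eq by simp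
  qed
  ultimately show ?thesis using that by blast
qed

lemma S_equi: "entourage E \<Longrightarrow> \<exists>D. entourage D \<and>
      (\<forall>g\<in>S. \<forall>y\<in>Zc. \<forall>w\<in>Zc. (y,w)\<in>D \<longrightarrow> (act g y, act g w) \<in> E)"
  by (rule stabZ) blast+

lemma pw_Suc': "pw (Suc m) u = pw m u + u"
  using pw_add[of m "Suc 0" u] by simp

lemma near_id:
  assumes u: "u \<in> S" and beta: "entourage \<beta>"
  obtains s where "s \<in> S \<or> s = 0" "\<And>z. z \<in> Zc \<Longrightarrow> (z, act (s + u) z) \<in> \<beta>"
proof -
  obtain B where B: "entourage B" "\<And>a b. (a,b)\<in>B \<Longrightarrow> (b,a)\<in>B"
    "\<And>a b c d e. (a,b)\<in>B \<Longrightarrow> (b,c)\<in>B \<Longrightarrow> (c,d)\<in>B \<Longrightarrow> (d,e)\<in>B \<Longrightarrow> (a,e)\<in>\<beta>"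
    using ent_split4[OF beta] by blast
  obtain F where F: "finite F" "F \<subseteq> S" "\<And>g. g \<in> S \<Longrightarrow> \<exists>f\<in>F. \<forall>z\<in>Zc. (act g z, act f z) \<in> B"
    using TB[OF S_equi B(1)] by blast
  define g where "g k = pw (Suc k) u" for k
  have gS: "g k \<in> S" for k unfolding g_def using pw_in[OF semi u] .
  define \<phi> where "\<phi> k = (SOME f. f \<in> F \<and> (\<forall>z\<in>Zc. (act (g k) z, act f z) \<in> B))" for k
  have \<phi>: "\<phi> k \<in> F \<and> (\<forall>z\<in>Zc. (act (g k) z, act (\<phi> k) z) \<in> B)" for k
    unfolding \<phi>_def by (rule someI_ex) (use F(3)[OF gS[of k]] in blast)
  obtain k l where kl: "k < l" "\<phi> k = \<phi> l" using pigeon_nat[OF F(1), of \<phi>] \<phi> by blast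
  define m where "m = l - Suc k"
  define s where "s = pw m u"
  have s: "s \<in> S \<or> s = 0" unfolding s_def by (cases m) (simp, metis pw_in[OF semi u])
  have gl: "g l = (s + u) + g k"
  proof -
    have "Suc l = Suc m + Suc k" unfolding m_def using kl(1) by simp
    then show ?thesis unfolding g_def s_def by (metis pw_add pw_Suc')
  qed
  have "(z', act (s + u) z') \<in> \<beta>" if z': "z' \<in> Zc" for z'
  proof -
    define z where "z = act (- g k) z'"
    have z: "z \<in> Zc" unfolding z_def using Z_inv[OF z'] .
    have 1: "(act (g k) z, act (\<phi> k) z) \<in> B" using \<phi>[of k] z by blast
    have 2: "(act (g l) z, act (\<phi> k) z) \<in> B" using \<phi>[of l] z kl(2) by auto
    have "(act (g k) z, act (g l) z) \<in> \<beta>"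
      using B(3)[OF 1 B(2)[OF 2] ent_refl[OF B(1)] ent_refl[OF B(1)]] .
    moreover have "act (g k) z = z'" unfolding z_def by simp
    moreover have "act (g l) z = act (s + u) z'" unfolding gl z_def by (simp add: act_add)
    ultimately show ?thesis by simp
  qed
  then show ?thesis using that s by blast
qed

lemma negS_equi:
  assumes E: "entourage E"
  obtains D where "entourage D"
    "\<And>u y w. u \<in> S \<Longrightarrow> y \<in> Zc \<Longrightarrow> w \<in> Zc \<Longrightarrow> (y, w) \<in> D \<Longrightarrow> (act (-u) y, act (-u) w) \<in> E"
proof -
  obtain B where B: "entourage B" "\<And>a b. (a,b)\<in>B \<Longrightarrow> (b,a)\<in>B"
    "\<And>a b c d e. (a,b)\<in>B \<Longrightarrow> (b,c)\<in>B \<Longrightarrow> (c,d)\<in>B \<Longrightarrow> (d,e)\<in>B \<Longrightarrow> (a,e)\<in>E"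
    using ent_split4[OF E] by blast
  obtain D1 where D1: "entourage D1"
    "\<And>s y w. s \<in> S \<Longrightarrow> y \<in> Zc \<Longrightarrow> w \<in> Zc \<Longrightarrow> (y, w) \<in> D1 \<Longrightarrow> (act s y, act s w) \<in> B"
    using stabZ[OF B(1)] by blast
  have "(act (-u) y, act (-u) w) \<in> E"
    if u: "u \<in> S" and y: "y \<in> Zc" and w: "w \<in> Zc" and yw: "(y, w) \<in> D1 \<inter> B" for u y w
  proof -
    obtain s where s: "s \<in> S \<or> s = 0" "\<And>z. z \<in> Zc \<Longrightarrow> (z, act (s + u) z) \<in> B"
      using near_id[OF u B(1)] by blast
    have ey: "act (s + u) (act (-u) y) = act s y" by (simp add: act_add)
    have ew: "act (s + u) (act (-u) w) = act s w" by (simp add: act_add)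
    have 1: "(act (-u) y, act s y) \<in> B" using s(2)[OF Z_inv[OF y, of "-u"]] ey by simp
    have 3: "(act s w, act (-u) w) \<in> B" using B(2)[OF s(2)[OF Z_inv[OF w, of "-u"]]] ew by simp
    have 2: "(act s y, act s w) \<in> B" using s(1) D1(2)[OF _ y w] yw by auto
    show ?thesis using B(3)[OF 1 2 3 ent_refl[OF B(1)]] .
  qed
  then show ?thesis using that ent_int[OF D1(1) B(1)] by blast
qed

lemma T_equi: "entourage E \<Longrightarrow> \<exists>D. entourage D \<and>
      (\<forall>t\<in>UNIV. \<forall>y\<in>Zc. \<forall>w\<in>Zc. (y,w)\<in>D \<longrightarrow> (act t y, act t w) \<in> E)"
proof -
  assume E: "entourage E"
  obtain D1 where D1: "entourage D1"
    "\<And>s y w. s \<in> S \<Longrightarrow> y \<in> Zc \<Longrightarrow> w \<in> Zc \<Longrightarrow> (y, w) \<in> D1 \<Longrightarrow> (act s y, act s w) \<in> E"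
    using stabZ[OF E] by blast
  obtain D2 where D2: "entourage D2"
    "\<And>u y w. u \<in> S \<Longrightarrow> y \<in> Zc \<Longrightarrow> w \<in> Zc \<Longrightarrow> (y, w) \<in> D2 \<Longrightarrow> (act (-u) y, act (-u) w) \<in> D1"
    using negS_equi[OF D1(1)] by blast
  have "(act t y, act t w) \<in> E" if y: "y \<in> Zc" and w: "w \<in> Zc" and yw: "(y, w) \<in> D2" for t y w
  proof -
    obtain a where a: "a \<in> S" "t + a \<in> S" using thick_pair by blast
    have eq: "act t v = act (t + a) (act (-a) v)" for v
      by (metis act_add act_inv(2))
    show ?thesis unfolding eq using D1(2)[OF a(2) Z_inv[OF y] Z_inv[OF w] D2(2)[OF a(1) y w yw]] .
  qed
  then show ?thesis using D2(1) by blast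
qed

lemma ap_Z: "ap_flow act Zc"
  unfolding ap_flow_def
proof (intro conjI allI impI)
  show "invariant act Zc" by (rule invariant_Z)
  fix \<alpha> :: "('x \<times> 'x) set" assume al: "entourage \<alpha>"
  obtain D where D: "entourage D" "\<And>t y w. y \<in> Zc \<Longrightarrow> w \<in> Zc \<Longrightarrow> (y,w)\<in>D \<Longrightarrow> (act t y, act t w) \<in> \<alpha>"
    using T_equi[OF al] by blast
  obtain F where F: "finite F" "\<And>g. g \<in> (UNIV::'t set) \<Longrightarrow> \<exists>f\<in>F. \<forall>z\<in>Zc. (act g z, act f z) \<in> {(a, b). (b, a) \<in> D}"
    by (rule TB[OF T_equi ent_conv[OF D(1)]]) blast+
  define A where "A = {r. \<forall>z\<in>Zc. (z, act r z) \<in> \<alpha>}"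
  have "syndetic A" unfolding syndetic_def
  proof (intro exI conjI allI)
    show "compact (uminus ` F)" using F(1) by (simp add: finite_imp_compact)
    fix t
    obtain f where f: "f \<in> F" "\<forall>z\<in>Zc. (act f z, act t z) \<in> D" using F(2)[of t] by (auto simp: case_prod_unfold)
    have "- f + t \<in> A" unfolding A_def
    proof (rule CollectI, rule ballI)
      fix z assume z: "z \<in> Zc"
      have "(act (-f) (act f z), act (-f) (act t z)) \<in> \<alpha>"
      proof (rule D(2))
        show "act f z \<in> Zc" "act t z \<in> Zc" using Z_inv[OF z] by auto
        show "(act f z, act t z) \<in> D" using f(2) z by auto
      qed
      then show "(z, act (- f + t) z) \<in> \<alpha>" by (simp add: act_add)
    qed
    moreover have "- f + t \<in> (\<lambda>k. k + t) ` uminus ` F" using f(1) by auto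
    ultimately show "(\<lambda>k. k + t) ` uminus ` F \<inter> A \<noteq> {}" by auto
  qed
  moreover have "\<forall>z\<in>Zc. \<forall>a\<in>A. (z, act a z) \<in> \<alpha>" unfolding A_def by blast
  ultimately show "\<exists>A. syndetic A \<and> (\<forall>z\<in>Zc. \<forall>a\<in>A. (z, act a z) \<in> \<alpha>)" by (intro exI[of _ A]) simp
qed

end

theorem corollary2:
  fixes act :: "'t::{topological_group_add, t2_space} \<Rightarrow> 'x::{uniform_space, t2_space} \<Rightarrow> 'x"
    and S :: "'t set" and x :: 'x
  assumes "is_flow act"
    and "subsemigroup S" and "thick S" and "normal_subset S"
    and "compact (closure (orbit act (uminus ` S) x))"
    and "unif_lyapunov_stable act S x"
  shows "compact (closure (orbit act UNIV x))
         \<and> minimal_flow act (closure (orbit act UNIV x))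
         \<and> ap_flow act (closure (orbit act UNIV x))"
proof -
  interpret flowctx act S x using assms by unfold_locales auto
  show ?thesis using Z_compact minimal_Z ap_Z by blast
qed

end
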